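(* If $H$ is a $2$-regular uniform hypergraph, then the Graver basis of $I_H$ is the unique minimal generating set of $I_H$.
   Context: A hypergraph $H$ has vertex set $V=\{1,\dots,n\}$ and a set $E(H)$ of edges, each a nonempty subset of $V$ (no repeated edges). It is uniform if all edges have the same size and $2$-regular if every vertex lies in exactly two edges. For a field $K$, the toric ideal $I_H$ is the kernel of $\phi_H: K[t_e : e\in E(H)]\to K[x_1,\dots,x_n]$, $t_e\mapsto\prod_{j\in e}x_j$. The Graver basis of $I_H$ is the set of primitive binomials of $I_H$, where a binomial $u-v\in I_H$ ($u,v$ monomials) is primitive if there is no other binomial $u'-v'\in I_H$ with $u'\mid u$ and $v'\mid v$. "Unique minimal generating set" means the Graver basis generates $I_H$ minimally and every minimal binomial generating set of $I_H$ coincides with it up to the signs of its elements. *)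

theory Defs
  imports "HOL-Library.Poly_Mapping"
begin

definition hypergraph :: "nat \<Rightarrow> nat set set \<Rightarrow> bool" where
  "hypergraph n E \<longleftrightarrow> (\<forall>e\<in>E. e \<noteq> {} \<and> e \<subseteq> {1..n})"

definition uniform_hg :: "nat set set \<Rightarrow> bool" where
  "uniform_hg E \<longleftrightarrow> (\<exists>d. \<forall>e\<in>E. card e = d)"

definition two_regular :: "nat \<Rightarrow> nat set set \<Rightarrow> bool" where
  "two_regular n E \<longleftrightarrow> (\<forall>v\<in>{1..n}. card {e\<in>E. v \<in> e} = 2)"

text \<open>The ring K[t_e : e in E] is the set of polynomials whose monomials only
  involve variables t_e with e in E.\<close>

type_synonym 'k tpoly = "(nat set \<Rightarrow>\<^sub>0 nat) \<Rightarrow>\<^sub>0 'k"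
type_synonym 'k xpoly = "(nat \<Rightarrow>\<^sub>0 nat) \<Rightarrow>\<^sub>0 'k"

definition poly_ring_E :: "nat set set \<Rightarrow> ('k::field) tpoly set" where
  "poly_ring_E E = {p. \<forall>m\<in>Poly_Mapping.keys p. Poly_Mapping.keys m \<subseteq> E}"

text \<open>Image of the monomial prod t_e^(m e) under t_e |-> prod_{j in e} x_j.\<close>
definition xmon :: "(nat set \<Rightarrow>\<^sub>0 nat) \<Rightarrow> (nat \<Rightarrow>\<^sub>0 nat)" where
  "xmon m = (\<Sum>e\<in>Poly_Mapping.keys m. \<Sum>j\<in>e. Poly_Mapping.single j (Poly_Mapping.lookup m e))"

definition phi_H :: "('k::field) tpoly \<Rightarrow> 'k xpoly" where
  "phi_H p = (\<Sum>m\<in>Poly_Mapping.keys p. Poly_Mapping.single (xmon m) (Poly_Mapping.lookup p m))"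

definition toric_ideal :: "nat set set \<Rightarrow> ('k::field) tpoly set" where
  "toric_ideal E = {p \<in> poly_ring_E E. phi_H p = 0}"

definition ideal_gen :: "nat set set \<Rightarrow> ('k::field) tpoly set \<Rightarrow> 'k tpoly set" where
  "ideal_gen E S = {(\<Sum>g\<in>F. c g * g) | F c. finite F \<and> F \<subseteq> S \<and> (\<forall>g\<in>F. c g \<in> poly_ring_E E)}"

definition binom :: "(nat set \<Rightarrow>\<^sub>0 nat) \<Rightarrow> (nat set \<Rightarrow>\<^sub>0 nat) \<Rightarrow> ('k::field) tpoly" where
  "binom u v = Poly_Mapping.single u 1 - Poly_Mapping.single v 1"

definition is_binomial :: "('k::field) tpoly \<Rightarrow> bool" where
  "is_binomial p \<longleftrightarrow> (\<exists>u v. p = binom u v)"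

definition mdvd :: "(nat set \<Rightarrow>\<^sub>0 nat) \<Rightarrow> (nat set \<Rightarrow>\<^sub>0 nat) \<Rightarrow> bool" where
  "mdvd u' u \<longleftrightarrow> (\<forall>e. Poly_Mapping.lookup u' e \<le> Poly_Mapping.lookup u e)"

definition primitive :: "('k::field) itself \<Rightarrow> nat set set \<Rightarrow> (nat set \<Rightarrow>\<^sub>0 nat) \<Rightarrow> (nat set \<Rightarrow>\<^sub>0 nat) \<Rightarrow> bool" where
  "primitive _ E u v \<longleftrightarrow> u \<noteq> v \<and> (binom u v :: 'k tpoly) \<in> toric_ideal E \<and>
     \<not> (\<exists>u' v'. u' \<noteq> v' \<and> (u', v') \<noteq> (u, v) \<and> (binom u' v' :: 'k tpoly) \<in> toric_ideal E
          \<and> mdvd u' u \<and> mdvd v' v)"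

definition graver_basis :: "nat set set \<Rightarrow> ('k::field) tpoly set" where
  "graver_basis E = {binom u v | u v. primitive TYPE('k) E u v}"

definition minimal_gen_set :: "nat set set \<Rightarrow> ('k::field) tpoly set \<Rightarrow> bool" where
  "minimal_gen_set E B \<longleftrightarrow> B \<subseteq> toric_ideal E \<and> ideal_gen E B = toric_ideal E \<and>
     (\<forall>g\<in>B. ideal_gen E (B - {g}) \<noteq> toric_ideal E)"

text \<open>The Graver basis is the unique minimal generating set: choosing one sign
  from each pair +-g of Graver elements gives a minimal generating set, and every
  minimal binomial generating set coincides with the Graver basis up to signs.\<close>
definition unique_minimal_gen_set :: "nat set set \<Rightarrow> ('k::field) tpoly set \<Rightarrow> bool" where
  "unique_minimal_gen_set E G \<longleftrightarrow>
     ideal_gen E G = toric_ideal E \<and>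
     (\<forall>S. S \<union> uminus ` S = G \<union> uminus ` G \<and> (\<forall>g\<in>S. - g \<notin> S) \<longrightarrow> minimal_gen_set E S) \<and>
     (\<forall>B. (\<forall>b\<in>B. is_binomial b) \<and> minimal_gen_set E B \<longrightarrow>
          B \<union> uminus ` B = G \<union> uminus ` G)"

end

theory Submission
  imports Defs
begin


type_synonym mono = "nat set \<Rightarrow>\<^sub>0 nat"

lemma lookup_mult_single:
  "Poly_Mapping.lookup (c * Poly_Mapping.single (u::mono) (1::'k::field)) (m + u) = Poly_Mapping.lookup c m"
proof -
  have "Poly_Mapping.lookup (c * Poly_Mapping.single u (1::'k)) (m + u)
     = (\<Sum>l. Poly_Mapping.lookup c l * (\<Sum>q. (1 when u = q) when m + u = l + q))"
    by (simp add: lookup_mult lookup_single)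
  also have "\<dots> = (\<Sum>l. Poly_Mapping.lookup c l * (1 when m + u = l + u))"
  proof -
    have "\<And>l. (\<Sum>q. ((1::'k) when u = q) when m + u = l + q) = (\<Sum>q. (1 when m + u = l + q) when u = q)"
      by (intro Sum_any.cong) (simp add: when_def)
    then show ?thesis by simp
  qed
  also have "\<dots> = (\<Sum>l. Poly_Mapping.lookup c l when l = m)"
    by (intro Sum_any.cong) (auto simp: when_def)
  finally show ?thesis by simp
qed

lemma keys_mult_single:
  "Poly_Mapping.keys (c * Poly_Mapping.single (u::mono) (1::'k::field)) \<subseteq> (\<lambda>m. m + u) ` Poly_Mapping.keys c"
  using keys_mult[of c "Poly_Mapping.single u (1::'k)"] by auto

lemma lookup_xmon:
  "Poly_Mapping.lookup (xmon m) j = (\<Sum>e\<in>Poly_Mapping.keys m. if finite e \<and> j \<in> e then Poly_Mapping.lookup m e else 0)"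
  unfolding xmon_def lookup_sum
proof (rule sum.cong[OF refl])
  fix e
  show "(\<Sum>i\<in>e. Poly_Mapping.lookup (Poly_Mapping.single i (Poly_Mapping.lookup m e)) j) =
        (if finite e \<and> j \<in> e then Poly_Mapping.lookup m e else 0)"
  proof (cases "finite e")
    case True
    then show ?thesis by (simp add: lookup_single when_def sum.delta)
  qed simp
qed

lemma lookup_xmon_superset:
  assumes "finite S" "Poly_Mapping.keys m \<subseteq> S"
  shows "Poly_Mapping.lookup (xmon m) j = (\<Sum>e\<in>S. if finite e \<and> j \<in> e then Poly_Mapping.lookup m e else 0)"
  unfolding lookup_xmon
  by (rule sum.mono_neutral_left) (use assms in \<open>auto simp: in_keys_iff\<close>)

lemma xmon_add: "xmon (a + b) = xmon a + xmon b"
proof (rule poly_mapping_eqI)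
  fix j
  let ?S = "Poly_Mapping.keys a \<union> Poly_Mapping.keys b"
  have f: "finite ?S" by simp
  show "Poly_Mapping.lookup (xmon (a + b)) j = Poly_Mapping.lookup (xmon a + xmon b) j"
    unfolding lookup_add
    using lookup_xmon_superset[OF f, of "a+b" j] lookup_xmon_superset[OF f, of a j]
      lookup_xmon_superset[OF f, of b j] keys_add[of a b]
    by (auto simp: lookup_add sum.distrib[symmetric] intro!: sum.cong)
qed

lemma xmon_zero: "xmon 0 = 0"
  by (simp add: xmon_def)



lemma R_zero: "0 \<in> poly_ring_E E" by (simp add: poly_ring_E_def)

lemma R_add: "p \<in> poly_ring_E E \<Longrightarrow> q \<in> poly_ring_E E \<Longrightarrow> p + q \<in> poly_ring_E E"
  unfolding poly_ring_E_def using keys_add[of p q] by fastforce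

lemma R_uminus: "p \<in> poly_ring_E E \<Longrightarrow> - p \<in> poly_ring_E E"
  unfolding poly_ring_E_def by simp

lemma R_diff: "p \<in> poly_ring_E E \<Longrightarrow> q \<in> poly_ring_E E \<Longrightarrow> p - q \<in> poly_ring_E E"
  unfolding poly_ring_E_def using keys_diff[of p q] by fastforce

lemma R_mult: "p \<in> poly_ring_E E \<Longrightarrow> q \<in> poly_ring_E E \<Longrightarrow> (p * q :: 'k::field tpoly) \<in> poly_ring_E E"
  unfolding poly_ring_E_def
proof safe
  fix m e
  assume p: "\<forall>m\<in>Poly_Mapping.keys p. Poly_Mapping.keys m \<subseteq> E"
    and q: "\<forall>m\<in>Poly_Mapping.keys q. Poly_Mapping.keys m \<subseteq> E"
    and m: "m \<in> Poly_Mapping.keys (p * q)" and e: "e \<in> Poly_Mapping.keys m"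
  from m keys_mult obtain a b where "m = a + b" "a \<in> Poly_Mapping.keys p" "b \<in> Poly_Mapping.keys q"
    by blast
  with p q e keys_add[of a b] show "e \<in> E" by blast
qed

lemma R_single: "Poly_Mapping.keys m \<subseteq> E \<Longrightarrow> Poly_Mapping.single m c \<in> poly_ring_E E"
  unfolding poly_ring_E_def by auto

lemma R_single0: "Poly_Mapping.single 0 c \<in> poly_ring_E E"
  by (rule R_single) simp

lemma R_one: "(1 :: 'k::field tpoly) \<in> poly_ring_E E"
  unfolding poly_ring_E_def by simp

section \<open>Ideal generated\<close>

lemma ideal_gen_zero: "0 \<in> ideal_gen E X"
  unfolding ideal_gen_def by (rule CollectI, rule exI[of _ "{}"]) auto

lemma ideal_gen_base: "g \<in> X \<Longrightarrow> g \<in> ideal_gen E (X :: 'k::field tpoly set)"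
  unfolding ideal_gen_def
  by (rule CollectI, rule exI[of _ "{g}"], rule exI[of _ "\<lambda>_. 1"]) (auto simp: R_one)

lemma ideal_gen_add:
  assumes "a \<in> ideal_gen E X" "b \<in> ideal_gen E X"
  shows "a + b \<in> ideal_gen E (X :: 'k::field tpoly set)"
proof -
  from assms(1) obtain F1 c1 where a: "a = (\<Sum>g\<in>F1. c1 g * g)" "finite F1" "F1 \<subseteq> X"
    "\<forall>g\<in>F1. c1 g \<in> poly_ring_E E" unfolding ideal_gen_def by blast
  from assms(2) obtain F2 c2 where b: "b = (\<Sum>g\<in>F2. c2 g * g)" "finite F2" "F2 \<subseteq> X"
    "\<forall>g\<in>F2. c2 g \<in> poly_ring_E E" unfolding ideal_gen_def by blast
  define c where "c g = (if g \<in> F1 then c1 g else 0) + (if g \<in> F2 then c2 g else 0)" for g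
  have fin: "finite (F1 \<union> F2)" using a b by simp
  have "(\<Sum>g\<in>F1 \<union> F2. c g * g) = (\<Sum>g\<in>F1 \<union> F2. (if g \<in> F1 then c1 g * g else 0) + (if g \<in> F2 then c2 g * g else 0))"
    by (rule sum.cong) (auto simp: c_def distrib_right)
  also have "\<dots> = (\<Sum>g\<in>F1 \<union> F2. (if g \<in> F1 then c1 g * g else 0))
        + (\<Sum>g\<in>F1 \<union> F2. (if g \<in> F2 then c2 g * g else 0))"
    by (rule sum.distrib)
  also have "\<dots> = a + b"
    using sum.inter_restrict[OF fin, of "\<lambda>g. c1 g * g" F1, symmetric]
      sum.inter_restrict[OF fin, of "\<lambda>g. c2 g * g" F2, symmetric] a b
    by (simp add: Int_absorb1 Int_absorb2)
  finally have "a + b = (\<Sum>g\<in>F1 \<union> F2. c g * g)" by simp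
  moreover have "\<forall>g\<in>F1 \<union> F2. c g \<in> poly_ring_E E"
    using a b by (auto simp: c_def intro!: R_add R_zero)
  ultimately show ?thesis unfolding ideal_gen_def
    by (intro CollectI exI[of _ "F1 \<union> F2"] exI[of _ c]) (use fin a b in auto)
qed

lemma ideal_gen_mult:
  assumes "r \<in> poly_ring_E E" "a \<in> ideal_gen E X"
  shows "r * a \<in> ideal_gen E (X :: 'k::field tpoly set)"
proof -
  from assms(2) obtain F c where a: "a = (\<Sum>g\<in>F. c g * g)" "finite F" "F \<subseteq> X"
    "\<forall>g\<in>F. c g \<in> poly_ring_E E" unfolding ideal_gen_def by blast
  have "r * a = (\<Sum>g\<in>F. (r * c g) * g)" using a by (simp add: sum_distrib_left mult.assoc)
  moreover have "\<forall>g\<in>F. r * c g \<in> poly_ring_E E" using a assms by (auto intro: R_mult)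
  ultimately show ?thesis unfolding ideal_gen_def
    by (intro CollectI exI[of _ F] exI[of _ "\<lambda>g. r * c g"]) (use a in auto)
qed

lemma ideal_gen_uminus:
  assumes "a \<in> ideal_gen E X"
  shows "- a \<in> ideal_gen E (X :: 'k::field tpoly set)"
proof -
  have "(- 1) * a \<in> ideal_gen E X" by (rule ideal_gen_mult[OF R_uminus[OF R_one] assms])
  then show ?thesis by simp
qed

lemma ideal_gen_diff:
  "a \<in> ideal_gen E X \<Longrightarrow> b \<in> ideal_gen E X \<Longrightarrow> a - b \<in> ideal_gen E (X :: 'k::field tpoly set)"
  using ideal_gen_add[of a E X "-b"] ideal_gen_uminus[of b E X] by simp

lemma ideal_gen_sum:
  assumes "finite F" "\<And>g. g \<in> F \<Longrightarrow> f g \<in> ideal_gen E X"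
  shows "(\<Sum>g\<in>F. f g) \<in> ideal_gen E (X :: 'k::field tpoly set)"
  using assms by (induction F rule: finite_induct) (auto intro: ideal_gen_zero ideal_gen_add)

lemma ideal_gen_closed:
  assumes "X \<subseteq> ideal_gen E Y"
  shows "ideal_gen E X \<subseteq> ideal_gen E (Y :: 'k::field tpoly set)"
proof
  fix a assume "a \<in> ideal_gen E X"
  then obtain F c where a: "a = (\<Sum>g\<in>F. c g * g)" "finite F" "F \<subseteq> X"
    "\<forall>g\<in>F. c g \<in> poly_ring_E E" unfolding ideal_gen_def by blast
  show "a \<in> ideal_gen E Y" unfolding a(1)
    by (rule ideal_gen_sum) (use a assms in \<open>auto intro: ideal_gen_mult\<close>)
qed

lemma ideal_gen_mono: "X \<subseteq> Y \<Longrightarrow> ideal_gen E X \<subseteq> ideal_gen E (Y :: 'k::field tpoly set)"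
  by (rule ideal_gen_closed) (auto intro: ideal_gen_base)



definition sig :: "(nat \<Rightarrow>\<^sub>0 nat) \<Rightarrow> ('k::field) tpoly \<Rightarrow> 'k" where
  "sig w p = (\<Sum>m\<in>Poly_Mapping.keys p. if xmon m = w then Poly_Mapping.lookup p m else 0)"

lemma lookup_phi: "Poly_Mapping.lookup (phi_H p) w = sig w p"
  unfolding phi_H_def sig_def lookup_sum by (auto simp: lookup_single when_def intro!: sum.cong)

lemma sig_superset:
  assumes "finite S" "Poly_Mapping.keys p \<subseteq> S"
  shows "sig w p = (\<Sum>m\<in>S. if xmon m = w then Poly_Mapping.lookup p m else 0)"
  unfolding sig_def
  by (rule sum.mono_neutral_left) (use assms in \<open>auto simp: in_keys_iff\<close>)

lemma sig_add: "sig w (p + q) = sig w p + sig w (q :: 'k::field tpoly)"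
proof -
  let ?S = "Poly_Mapping.keys p \<union> Poly_Mapping.keys q"
  have f: "finite ?S" by simp
  show ?thesis
    using sig_superset[OF f, of "p+q" w] sig_superset[OF f, of p w] sig_superset[OF f, of q w] keys_add[of p q]
    by (auto simp: lookup_add sum.distrib[symmetric] intro!: sum.cong)
qed

lemma sig_uminus: "sig w (- p) = - sig w (p :: 'k::field tpoly)"
  unfolding sig_def by (simp add: sum_negf[symmetric] if_distrib cong: if_cong)

lemma sig_diff: "sig w (p - q) = sig w p - sig w (q :: 'k::field tpoly)"
  using sig_add[of w p "-q"] sig_uminus[of w q] by simp

lemma sig_mult_single:
  "sig w (c * Poly_Mapping.single u (1::'k::field)) =
    (\<Sum>m\<in>Poly_Mapping.keys c. if xmon m + xmon u = w then Poly_Mapping.lookup c m else 0)"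
proof -
  have f: "finite ((\<lambda>m. m + u) ` Poly_Mapping.keys c)" by simp
  have "sig w (c * Poly_Mapping.single u (1::'k)) =
     (\<Sum>k\<in>(\<lambda>m. m + u) ` Poly_Mapping.keys c. if xmon k = w then Poly_Mapping.lookup (c * Poly_Mapping.single u (1::'k)) k else 0)"
    by (rule sig_superset[OF f keys_mult_single])
  also have "\<dots> = (\<Sum>m\<in>Poly_Mapping.keys c. if xmon (m + u) = w then Poly_Mapping.lookup (c * Poly_Mapping.single u (1::'k)) (m + u) else 0)"
    by (subst sum.reindex) (auto simp: inj_on_def)
  also have "\<dots> = (\<Sum>m\<in>Poly_Mapping.keys c. if xmon m + xmon u = w then Poly_Mapping.lookup c m else 0)"
    by (intro sum.cong refl) (simp only: lookup_mult_single xmon_add)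
  finally show ?thesis .
qed

lemma toric_iff: "p \<in> toric_ideal E \<longleftrightarrow> p \<in> poly_ring_E E \<and> (\<forall>w. sig w (p :: 'k::field tpoly) = 0)"
  unfolding toric_ideal_def by (auto simp: poly_mapping_eq_iff lookup_phi fun_eq_iff)

lemma I_add: "p \<in> toric_ideal E \<Longrightarrow> q \<in> toric_ideal E \<Longrightarrow> p + q \<in> toric_ideal E"
  by (simp add: toric_iff sig_add R_add)

lemma I_zero: "0 \<in> toric_ideal E"
  by (simp add: toric_iff R_zero sig_def)

section \<open>Binomials\<close>

lemma binom_neg: "- binom u v = (binom v u :: 'k::field tpoly)"
  by (simp add: binom_def)

lemma binom_same: "binom u u = (0 :: 'k::field tpoly)"
  by (simp add: binom_def)

lemma lookup_binom:
  "Poly_Mapping.lookup (binom u v :: 'k::field tpoly) m = (if m = u then 1 else 0) - (if m = v then 1 else 0)"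
  by (simp add: binom_def lookup_minus lookup_single when_def eq_commute)

lemma keys_binom: "u \<noteq> v \<Longrightarrow> Poly_Mapping.keys (binom u v :: 'k::field tpoly) = {u, v}"
  by (auto simp: in_keys_iff lookup_binom split: if_splits)

lemma binom_neq_zero: "u \<noteq> v \<Longrightarrow> binom u v \<noteq> (0 :: 'k::field tpoly)"
proof
  assume "u \<noteq> v" "binom u v = (0 :: 'k tpoly)"
  then have "Poly_Mapping.keys (binom u v :: 'k tpoly) = {}" by simp
  then show False using keys_binom[OF \<open>u \<noteq> v\<close>, where 'k='k] by simp
qed

lemma sig_binom: "sig w (binom u v :: 'k::field tpoly) = (if xmon u = w then 1 else 0) - (if xmon v = w then 1 else 0)"
proof -
  have f: "finite {u, v}" by simp
  have k: "Poly_Mapping.keys (binom u v :: 'k tpoly) \<subseteq> {u, v}"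
    by (auto simp: in_keys_iff lookup_binom split: if_splits)
  show ?thesis
  proof (cases "u = v")
    case True then show ?thesis by (simp add: binom_same sig_def)
  next
    case False
    then show ?thesis by (subst sig_superset[OF f k]) (simp add: lookup_binom)
  qed
qed

lemma binom_in_I:
  assumes "u \<noteq> v"
  shows "(binom u v :: 'k::field tpoly) \<in> toric_ideal E \<longleftrightarrow>
    Poly_Mapping.keys u \<subseteq> E \<and> Poly_Mapping.keys v \<subseteq> E \<and> xmon u = xmon v"
proof -
  have R: "(binom u v :: 'k tpoly) \<in> poly_ring_E E \<longleftrightarrow> Poly_Mapping.keys u \<subseteq> E \<and> Poly_Mapping.keys v \<subseteq> E"
    unfolding poly_ring_E_def using keys_binom[OF assms, where 'k='k] by auto
  have S: "(\<forall>w. sig w (binom u v :: 'k tpoly) = 0) \<longleftrightarrow> xmon u = xmon v"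
  proof
    assume "\<forall>w. sig w (binom u v :: 'k tpoly) = 0"
    then have "sig (xmon u) (binom u v :: 'k tpoly) = 0" by blast
    then show "xmon u = xmon v" by (auto simp: sig_binom split: if_splits)
  qed (simp add: sig_binom)
  show ?thesis using R S toric_iff by blast
qed

lemma binom_in_I_D:
  assumes "(binom u v :: 'k::field tpoly) \<in> toric_ideal E" "u \<noteq> v"
  shows "Poly_Mapping.keys u \<subseteq> E" "Poly_Mapping.keys v \<subseteq> E" "xmon u = xmon v"
  using assms binom_in_I by blast+

lemma mult_binom_in_I:
  assumes "(binom u v :: 'k::field tpoly) \<in> toric_ideal E" "c \<in> poly_ring_E E"
  shows "c * (binom u v :: 'k tpoly) \<in> toric_ideal E"
proof (cases "u = v")
  case True then show ?thesis by (simp add: binom_same I_zero)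
next
  case False
  note d = binom_in_I_D[OF assms(1) False]
  have "c * binom u v \<in> poly_ring_E E"
  proof -
    have "(binom u v :: 'k tpoly) \<in> poly_ring_E E" using assms(1) unfolding toric_ideal_def by simp
    then show ?thesis using R_mult assms(2) by blast
  qed
  moreover have "sig w (c * binom u v) = 0" for w
    unfolding binom_def right_diff_distrib sig_diff sig_mult_single using d by simp
  ultimately show ?thesis by (simp add: toric_iff)
qed

lemma ideal_gen_binoms_sub:
  assumes "X \<subseteq> toric_ideal E" "\<forall>x\<in>X. is_binomial x"
  shows "ideal_gen E X \<subseteq> toric_ideal E"
proof
  fix a :: "'a::field tpoly" assume "a \<in> ideal_gen E X"
  then obtain F c where a: "a = (\<Sum>g\<in>F. c g * g)" "finite F" "F \<subseteq> X"
    "\<forall>g\<in>F. c g \<in> poly_ring_E E" unfolding ideal_gen_def by blast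
  have "\<forall>g\<in>F. c g * g \<in> toric_ideal E"
  proof
    fix g assume g: "g \<in> F"
    then obtain u v where "g = binom u v" using a assms unfolding is_binomial_def by blast
    moreover have "g \<in> toric_ideal E" using g a assms by blast
    moreover have "c g \<in> poly_ring_E E" using g a by blast
    ultimately show "c g * g \<in> toric_ideal E" using mult_binom_in_I[of u v E "c g"] by simp
  qed
  with a(2) show "a \<in> toric_ideal E" unfolding a(1)
    by (induction F rule: finite_induct) (auto intro: I_add I_zero)
qed



definition deg :: "nat set set \<Rightarrow> mono \<Rightarrow> nat" where
  "deg E x = (\<Sum>e\<in>E. Poly_Mapping.lookup x e)"

lemma mdvd_refl: "mdvd u u" by (simp add: mdvd_def)

lemma mdvd_trans: "mdvd a b \<Longrightarrow> mdvd b c \<Longrightarrow> mdvd a c"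
  unfolding mdvd_def using le_trans by blast

lemma mdvd_keys: assumes h: "mdvd a b" shows "Poly_Mapping.keys a \<subseteq> Poly_Mapping.keys b"
proof
  fix e assume "e \<in> Poly_Mapping.keys a"
  hence "Poly_Mapping.lookup a e \<noteq> 0" by (simp add: in_keys_iff)
  moreover have "Poly_Mapping.lookup a e \<le> Poly_Mapping.lookup b e" using h mdvd_def by blast
  ultimately have "Poly_Mapping.lookup b e \<noteq> 0" by linarith
  thus "e \<in> Poly_Mapping.keys b" by (simp add: in_keys_iff)
qed

lemma mdvd_deg_le:
  assumes "mdvd x' x" shows "deg E x' \<le> deg E x"
  unfolding deg_def by (rule sum_mono) (use assms in \<open>simp add: mdvd_def\<close>)

lemma mdvd_deg_strict:
  assumes "finite E" "Poly_Mapping.keys x \<subseteq> E" "mdvd x' x" "x' \<noteq> x"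
  shows "deg E x' < deg E x"
proof -
  have "\<exists>e. Poly_Mapping.lookup x' e \<noteq> Poly_Mapping.lookup x e"
    using assms(4) by (simp add: poly_mapping_eq_iff fun_eq_iff)
  then obtain e where e: "Poly_Mapping.lookup x' e \<noteq> Poly_Mapping.lookup x e" by (elim exE)
  have le: "Poly_Mapping.lookup x' e \<le> Poly_Mapping.lookup x e" using assms(3) by (simp add: mdvd_def)
  with e have lt: "Poly_Mapping.lookup x' e < Poly_Mapping.lookup x e" by simp
  hence "e \<in> Poly_Mapping.keys x" by (simp add: in_keys_iff)
  hence eE: "e \<in> E" using assms(2) by (rule subsetD[rotated])
  have A: "\<forall>y\<in>E. Poly_Mapping.lookup x' y \<le> Poly_Mapping.lookup x y" using assms(3) by (simp add: mdvd_def)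
  have B: "\<exists>y\<in>E. Poly_Mapping.lookup x' y < Poly_Mapping.lookup x y" using eE lt by (rule bexI[rotated])
  show ?thesis unfolding deg_def by (rule sum_strict_mono_ex1[OF assms(1) A B])
qed

lemma mdvd_deg_less:
  assumes "finite E" "Poly_Mapping.keys u \<subseteq> E" "Poly_Mapping.keys v \<subseteq> E"
    "mdvd u' u" "mdvd v' v" "(u', v') \<noteq> (u, v)"
  shows "deg E u' + deg E v' < deg E u + deg E v"
proof (cases "u' = u")
  case True
  then have "v' \<noteq> v" using assms(6) by simp
  then have "deg E v' < deg E v" by (rule mdvd_deg_strict[OF assms(1,3,5)])
  then show ?thesis using mdvd_deg_le[OF assms(4), of E] by linarith
next
  case False
  then have "deg E u' < deg E u" by (rule mdvd_deg_strict[OF assms(1,2,4)])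
  then show ?thesis using mdvd_deg_le[OF assms(5), of E] by linarith
qed

lemma exists_primitive_below:
  assumes fin: "finite E"
  shows "(binom u v :: 'k::field tpoly) \<in> toric_ideal E \<Longrightarrow> u \<noteq> v \<Longrightarrow>
    \<exists>u' v'. primitive TYPE('k) E u' v' \<and> mdvd u' u \<and> mdvd v' v"
proof (induction "deg E u + deg E v" arbitrary: u v rule: less_induct)
  case less
  show ?case
  proof (cases "primitive TYPE('k) E u v")
    case True
    then show ?thesis using mdvd_refl[of u] mdvd_refl[of v] by blast
  next
    case False
    have "\<exists>u' v'. u' \<noteq> v' \<and> (u', v') \<noteq> (u, v) \<and> (binom u' v' :: 'k tpoly) \<in> toric_ideal E
          \<and> mdvd u' u \<and> mdvd v' v"
      using False less.prems unfolding primitive_def by (simp; blast)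
    then obtain u' v' where uv': "u' \<noteq> v'" "(u', v') \<noteq> (u, v)"
      "(binom u' v' :: 'k tpoly) \<in> toric_ideal E" "mdvd u' u" "mdvd v' v"
      by blast
    have "deg E u' + deg E v' < deg E u + deg E v"
      using mdvd_deg_less[OF fin binom_in_I_D(1,2)[OF less.prems] uv'(4,5,2)] .
    from less.hyps[OF this uv'(3,1)] obtain u'' v'' where
      pp: "primitive TYPE('k) E u'' v''" "mdvd u'' u'" "mdvd v'' v'" by blast
    have "mdvd u'' u" by (rule mdvd_trans[OF pp(2) uv'(4)])
    moreover have "mdvd v'' v" by (rule mdvd_trans[OF pp(3) uv'(5)])
    ultimately show ?thesis using pp(1) by blast
  qed
qed

lemma mdvd_decomp: "mdvd u' u \<Longrightarrow> u = (u - u') + u'"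
  unfolding mdvd_def by (auto intro!: poly_mapping_eqI simp: lookup_add lookup_minus)

lemma mdvd_diff: "mdvd (u - u') u"
  unfolding mdvd_def by (auto simp: lookup_minus)

lemma binom_decomp:
  "(binom (a + u') (b + v') :: 'k::field tpoly) =
     Poly_Mapping.single a 1 * binom u' v' + Poly_Mapping.single v' 1 * binom a b"
  unfolding binom_def by (simp add: right_diff_distrib mult_single add.commute)

lemma primitive_in_I: "primitive TYPE('k::field) E u v \<Longrightarrow> (binom u v :: 'k tpoly) \<in> toric_ideal E"
  unfolding primitive_def by blast

lemma primitive_neq: "primitive TYPE('k::field) E u v \<Longrightarrow> u \<noteq> v"
  unfolding primitive_def by blast

lemma binom_in_gen:
  assumes fin: "finite E"
  shows "(binom u v :: 'k::field tpoly) \<in> toric_ideal E \<Longrightarrow> binom u v \<in> ideal_gen E (graver_basis E :: 'k tpoly set)"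
proof (induction "deg E u + deg E v" arbitrary: u v rule: less_induct)
  case less
  show ?case
  proof (cases "u = v")
    case True then show ?thesis by (simp add: binom_same ideal_gen_zero)
  next
    case False
    note d = binom_in_I_D[OF less.prems False]
    from exists_primitive_below[OF fin less.prems False] obtain u' v' where
      p: "primitive TYPE('k) E u' v'" "mdvd u' u" "mdvd v' v" by blast
    note d' = binom_in_I_D[OF primitive_in_I[OF p(1)] primitive_neq[OF p(1)]]
    define a where "a = u - u'"
    define b where "b = v - v'"
    have ua: "u = a + u'" using mdvd_decomp[OF p(2)] a_def by simp
    have vb: "v = b + v'" using mdvd_decomp[OF p(3)] b_def by simp
    have ka: "Poly_Mapping.keys a \<subseteq> E" using mdvd_keys[OF mdvd_diff[of u u']] d a_def by blast
    have kb: "Poly_Mapping.keys b \<subseteq> E" using mdvd_keys[OF mdvd_diff[of v v']] d b_def by blast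
    have kv': "Poly_Mapping.keys v' \<subseteq> E" using d' by blast
    have xab: "xmon a = xmon b"
      using d(3) d'(3) unfolding ua vb xmon_add by simp
    have abI: "(binom a b :: 'k tpoly) \<in> toric_ideal E"
    proof (cases "a = b")
      case True then show ?thesis by (simp add: binom_same I_zero)
    next
      case False then show ?thesis using binom_in_I ka kb xab by blast
    qed
    have "(a, b) \<noteq> (u, v)"
    proof
      assume "(a, b) = (u, v)"
      then have "u' = 0" "v' = 0" using ua vb by (auto simp: add_cancel_left_right)
      then show False using primitive_neq[OF p(1)] by simp
    qed
    then have "deg E a + deg E b < deg E u + deg E v"
      using mdvd_deg_less[OF fin d(1,2)] mdvd_diff a_def b_def by blast
    from less.hyps[OF this abI] have abG: "binom a b \<in> ideal_gen E (graver_basis E :: 'k tpoly set)" .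
    have g: "(binom u' v' :: 'k tpoly) \<in> graver_basis E"
      unfolding graver_basis_def using p(1) by blast
    have "(binom u v :: 'k tpoly) = Poly_Mapping.single a 1 * binom u' v' + Poly_Mapping.single v' 1 * binom a b"
      unfolding ua vb by (rule binom_decomp)
    also have "\<dots> \<in> ideal_gen E (graver_basis E)"
      by (intro ideal_gen_add ideal_gen_mult R_single ideal_gen_base g abG ka kv')
    finally show ?thesis .
  qed
qed

lemma toric_sub_gen:
  assumes fin: "finite E"
  shows "(p :: 'k::field tpoly) \<in> toric_ideal E \<Longrightarrow> p \<in> ideal_gen E (graver_basis E :: 'k tpoly set)"
proof (induction "card (Poly_Mapping.keys p)" arbitrary: p rule: less_induct)
  case less
  show ?case
  proof (cases "p = 0")
    case True then show ?thesis by (simp add: ideal_gen_zero)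
  next
    case False
    then have "Poly_Mapping.keys p \<noteq> {}" by simp
    then obtain m where m: "m \<in> Poly_Mapping.keys p" by blast
    have pR: "p \<in> poly_ring_E E" using less.prems by (simp add: toric_iff)
    have sig0: "\<And>w. sig w p = 0" using less.prems by (simp add: toric_iff)
    have km: "Poly_Mapping.keys m \<subseteq> E" using pR m unfolding poly_ring_E_def by simp
    have "\<exists>m'\<in>Poly_Mapping.keys p. m' \<noteq> m \<and> xmon m' = xmon m"
    proof (rule ccontr)
      assume nex: "\<not> ?thesis"
      have "sig (xmon m) p = (\<Sum>m'\<in>Poly_Mapping.keys p. if xmon m' = xmon m then Poly_Mapping.lookup p m' else 0)"
        by (simp add: sig_def)
      also have "\<dots> = (\<Sum>m'\<in>Poly_Mapping.keys p. if m' = m then Poly_Mapping.lookup p m' else 0)"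
        by (rule sum.cong[OF refl]) (use nex in auto)
      also have "\<dots> = Poly_Mapping.lookup p m" using m by (simp add: sum.delta)
      finally have "Poly_Mapping.lookup p m = 0" using sig0[of "xmon m"] by simp
      then show False using m by (simp add: in_keys_iff)
    qed
    then obtain m' where m': "m' \<in> Poly_Mapping.keys p" "m' \<noteq> m" "xmon m' = xmon m" by (elim bexE conjE)
    have km': "Poly_Mapping.keys m' \<subseteq> E" using pR m' unfolding poly_ring_E_def by simp
    define c where "c = Poly_Mapping.lookup p m"
    define q where "q = Poly_Mapping.single 0 c * (binom m m' :: 'k tpoly)"
    have q_eq: "q = Poly_Mapping.single m c - Poly_Mapping.single m' c"
      unfolding q_def binom_def by (simp add: right_diff_distrib mult_single)
    have bI: "(binom m m' :: 'k tpoly) \<in> toric_ideal E"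
      using binom_in_I[of m m' E] m' km km' by simp
    have qI: "q \<in> toric_ideal E" unfolding q_def by (rule mult_binom_in_I[OF bI R_single0])
    have qG: "q \<in> ideal_gen E (graver_basis E)"
      unfolding q_def by (intro ideal_gen_mult R_single0 binom_in_gen[OF fin bI])
    define p' where "p' = p - q"
    have qR: "q \<in> poly_ring_E E" and sigq: "\<And>w. sig w q = 0" using qI by (simp_all add: toric_iff)
    have p'I: "p' \<in> toric_ideal E"
      unfolding p'_def toric_iff by (simp add: sig_diff sig0 sigq R_diff pR qR)
    have sub: "Poly_Mapping.keys p' \<subseteq> Poly_Mapping.keys p - {m}"
    proof
      fix k assume k: "k \<in> Poly_Mapping.keys p'"
      then have ne: "Poly_Mapping.lookup p k \<noteq> Poly_Mapping.lookup q k"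
        by (simp add: p'_def in_keys_iff lookup_minus)
      have lq: "Poly_Mapping.lookup q k = (if k = m then c else 0) - (if k = m' then c else 0)"
        unfolding q_eq by (simp add: lookup_minus lookup_single when_def eq_commute)
      show "k \<in> Poly_Mapping.keys p - {m}"
      proof (cases "k = m")
        case True then show ?thesis using ne lq m' c_def by simp
      next
        case F: False
        show ?thesis
        proof (cases "k = m'")
          case True then show ?thesis using F m' by simp
        next
          case False then show ?thesis using F ne lq by (simp add: in_keys_iff)
        qed
      qed
    qed
    have "Poly_Mapping.keys p' \<subset> Poly_Mapping.keys p" using sub m by blast
    then have "card (Poly_Mapping.keys p') < card (Poly_Mapping.keys p)"
      by (rule psubset_card_mono[OF finite_keys])
    from less.hyps[OF this p'I] have "p' \<in> ideal_gen E (graver_basis E)" .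
    then have "p' + q \<in> ideal_gen E (graver_basis E)" using qG by (rule ideal_gen_add)
    then show ?thesis by (simp add: p'_def)
  qed
qed



definition ind :: "mono \<Rightarrow> mono" where
  "ind a = Poly_Mapping.map (\<lambda>x::nat. if x = 0 then 0 else 1) a"

lemma lookup_ind: "Poly_Mapping.lookup (ind a) e = (if Poly_Mapping.lookup a e = 0 then 0 else 1)"
  unfolding ind_def by (simp add: map.rep_eq when_def)

definition nbr :: "nat \<Rightarrow> nat set set \<Rightarrow> nat set \<Rightarrow> nat set \<Rightarrow> bool" where
  "nbr n E e f \<longleftrightarrow> e \<noteq> f \<and> (\<exists>j\<in>{1..n}. {e'\<in>E. j \<in> e'} = {e, f})"

locale hg2 =
  fixes n :: nat and E :: "nat set set"
  assumes hyp: "hypergraph n E" and reg: "two_regular n E"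
begin

lemma finE: "finite E"
proof -
  have "E \<subseteq> Pow {1..n}" using hyp unfolding hypergraph_def by blast
  then show ?thesis by (rule finite_subset) simp
qed

lemma edge_finite: "e \<in> E \<Longrightarrow> finite e"
  using hyp unfolding hypergraph_def by (meson finite_atLeastAtMost finite_subset)

lemma star: assumes "j \<in> {1..n}" shows "\<exists>e f. e \<noteq> f \<and> {e'\<in>E. j \<in> e'} = {e, f}"
proof -
  have "card {e'\<in>E. j \<in> e'} = 2" using reg assms unfolding two_regular_def by simp
  from card_2_iff[THEN iffD1, OF this] show ?thesis
    by (elim exE conjE) (intro exI conjI, assumption+)
qed

lemma star_empty: assumes "j \<notin> {1..n}" shows "{e'\<in>E. j \<in> e'} = {}"
proof -
  have *: "\<forall>e\<in>E. e \<subseteq> {1..n}" using hyp unfolding hypergraph_def by simp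
  show ?thesis
  proof (rule equals0I)
    fix e assume "e \<in> {e'\<in>E. j \<in> e'}"
    hence "e \<in> E" "j \<in> e" by simp_all
    hence "j \<in> {1..n}" using * by blast
    thus False using assms by simp
  qed
qed

lemma lookup_xmon_E:
  assumes "Poly_Mapping.keys x \<subseteq> E"
  shows "Poly_Mapping.lookup (xmon x) j = (\<Sum>e\<in>{e'\<in>E. j \<in> e'}. Poly_Mapping.lookup x e)"
proof -
  have "Poly_Mapping.lookup (xmon x) j = (\<Sum>e\<in>E. if finite e \<and> j \<in> e then Poly_Mapping.lookup x e else 0)"
    by (rule lookup_xmon_superset[OF finE assms])
  also have "\<dots> = (\<Sum>e\<in>E. if j \<in> e then Poly_Mapping.lookup x e else 0)"
    by (rule sum.cong[OF refl]) (simp add: edge_finite)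
  also have "\<dots> = (\<Sum>e\<in>{e'\<in>E. j \<in> e'}. Poly_Mapping.lookup x e)"
    by (simp add: sum.inter_filter[OF finE])
  finally show ?thesis .
qed

lemma xmon_nbr:
  assumes "Poly_Mapping.keys x \<subseteq> E" "Poly_Mapping.keys y \<subseteq> E" "xmon x = xmon y" "nbr n E e f"
  shows "Poly_Mapping.lookup x e + Poly_Mapping.lookup x f = Poly_Mapping.lookup y e + Poly_Mapping.lookup y f"
proof -
  from assms(4) have "e \<noteq> f" "\<exists>j\<in>{1..n}. {e'\<in>E. j \<in> e'} = {e, f}" unfolding nbr_def by simp_all
  then obtain j where j: "e \<noteq> f" "{e'\<in>E. j \<in> e'} = {e, f}" by (elim bexE) simp
  have "Poly_Mapping.lookup (xmon x) j = Poly_Mapping.lookup (xmon y) j" using assms(3) by simp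
  then show ?thesis unfolding lookup_xmon_E[OF assms(1)] lookup_xmon_E[OF assms(2)] j(2)
    using j(1) by simp
qed

lemma nbr_xmon:
  assumes "Poly_Mapping.keys x \<subseteq> E" "Poly_Mapping.keys y \<subseteq> E"
    "\<And>e f. nbr n E e f \<Longrightarrow> Poly_Mapping.lookup x e + Poly_Mapping.lookup x f = Poly_Mapping.lookup y e + Poly_Mapping.lookup y f"
  shows "xmon x = xmon y"
proof (rule poly_mapping_eqI)
  fix j
  show "Poly_Mapping.lookup (xmon x) j = Poly_Mapping.lookup (xmon y) j"
  proof (cases "j \<in> {1..n}")
    case True
    from star[OF True] obtain e f where ef: "e \<noteq> f" "{e'\<in>E. j \<in> e'} = {e, f}" by (elim exE conjE) blast
    then have "nbr n E e f" unfolding nbr_def using True by (intro conjI bexI[of _ j])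
    then show ?thesis unfolding lookup_xmon_E[OF assms(1)] lookup_xmon_E[OF assms(2)] ef(2)
      using ef(1) assms(3) by simp
  next
    case False
    then show ?thesis unfolding lookup_xmon_E[OF assms(1)] lookup_xmon_E[OF assms(2)] star_empty[OF False]
      by simp
  qed
qed

lemma nbr_exists: assumes "e \<in> E" shows "\<exists>f. nbr n E e f"
proof -
  have "e \<noteq> {}" "e \<subseteq> {1..n}" using hyp assms unfolding hypergraph_def by simp_all
  then obtain j where j: "j \<in> e" "j \<in> {1..n}" by (meson ex_in_conv subsetD)
  from star[OF j(2)] obtain e1 e2 where ef: "e1 \<noteq> e2" "{e'\<in>E. j \<in> e'} = {e1, e2}" by (elim exE conjE) blast
  have "e \<in> {e'\<in>E. j \<in> e'}" using assms j(1) by simp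
  then have "e \<in> {e1, e2}" using ef(2) by simp
  then show ?thesis
  proof
    assume "e = e1"
    then have "nbr n E e e2" unfolding nbr_def using ef j by (intro conjI bexI[of _ j]) simp_all
    then show ?thesis by blast
  next
    assume "e \<in> {e2}"
    then have "nbr n E e e1" unfolding nbr_def using ef j by (intro conjI bexI[of _ j]) (simp_all add: insert_commute)
    then show ?thesis by blast
  qed
qed

end



lemma prim_below:
  assumes p: "primitive TYPE('k::field) E a b" and "Poly_Mapping.keys a' \<subseteq> E" "Poly_Mapping.keys b' \<subseteq> E"
    "xmon a' = xmon b'" "a' \<noteq> b'" "mdvd a' a" "mdvd b' b"
  shows "a' = a \<and> b' = b"
proof (rule ccontr)
  assume "\<not> (a' = a \<and> b' = b)"
  then have ne: "(a', b') \<noteq> (a, b)" by simp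
  have np: "\<not> (\<exists>u' v'. u' \<noteq> v' \<and> (u', v') \<noteq> (a, b) \<and> (binom u' v' :: 'k tpoly) \<in> toric_ideal E
          \<and> mdvd u' a \<and> mdvd v' b)"
    using p unfolding primitive_def by simp
  have I: "(binom a' b' :: 'k tpoly) \<in> toric_ideal E"
    by (rule binom_in_I[OF assms(5), THEN iffD2]) (use assms(2-4) in simp)
  have "\<exists>u' v'. u' \<noteq> v' \<and> (u', v') \<noteq> (a, b) \<and> (binom u' v' :: 'k tpoly) \<in> toric_ideal E
          \<and> mdvd u' a \<and> mdvd v' b"
    apply (rule exI[of _ a'], rule exI[of _ b'])
    using assms(5-7) ne I by simp
  with np show False by contradiction
qed

lemma prim_xmon:
  assumes p: "primitive TYPE('k::field) E a b"
  shows "Poly_Mapping.keys a \<subseteq> E" "Poly_Mapping.keys b \<subseteq> E" "xmon a = xmon b"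
  using binom_in_I_D[OF primitive_in_I[OF p] primitive_neq[OF p]] by simp_all

lemma prim_disj:
  assumes p: "primitive TYPE('k::field) E a b"
  shows "Poly_Mapping.lookup a e = 0 \<or> Poly_Mapping.lookup b e = 0"
proof -
  note d = prim_xmon[OF p]
  define k where "k = a - (a - b)"
  define a' where "a' = a - k"
  define b' where "b' = b - k"
  have la: "a = a' + k" unfolding a'_def k_def
    by (rule poly_mapping_eqI) (simp add: lookup_add lookup_minus)
  have lb: "b = b' + k" unfolding b'_def k_def
    by (rule poly_mapping_eqI) (simp add: lookup_add lookup_minus)
  have x: "xmon a' = xmon b'" using d(3) unfolding xmon_add la lb by simp
  have ma: "mdvd a' a" unfolding a'_def by (rule mdvd_diff)
  have mb: "mdvd b' b" unfolding b'_def by (rule mdvd_diff)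
  have ka: "Poly_Mapping.keys a' \<subseteq> E" using mdvd_keys[OF ma] d(1) by (rule subset_trans)
  have kb: "Poly_Mapping.keys b' \<subseteq> E" using mdvd_keys[OF mb] d(2) by (rule subset_trans)
  have ne: "a' \<noteq> b'"
  proof
    assume "a' = b'" then have "a = b" using la lb by simp
    then show False using primitive_neq[OF p] by contradiction
  qed
  have "a' = a" using prim_below[OF p ka kb x ne ma mb] by simp
  then have "Poly_Mapping.lookup a' e = Poly_Mapping.lookup a e" by simp
  then show ?thesis unfolding a'_def k_def by (simp add: lookup_minus) arith
qed

lemma ind_arith:
  fixes ae af be bf :: nat
  assumes "ae = 0 \<or> be = 0" "af = 0 \<or> bf = 0" "ae + af = be + bf"
  shows "(if ae = 0 then 0 else 1) + (if af = 0 then 0 else 1) =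
         (if be = 0 then 0 else 1) + (if bf = (0::nat) then 0 else (1::nat))"
  using assms by auto

lemma fiber_arith:
  fixes ae af be bf me mf :: nat
  assumes "ae \<le> 1" "be \<le> 1" "af \<le> 1" "bf \<le> 1" "ae = 0 \<or> be = 0" "af = 0 \<or> bf = 0"
    "me + mf = ae + af" "ae + af = be + bf"
  shows "me \<le> ae + be"
  using assms by linarith

context hg2
begin

lemma prim_01:
  assumes p: "primitive TYPE('k::field) E a b"
  shows "Poly_Mapping.lookup a e \<le> 1 \<and> Poly_Mapping.lookup b e \<le> 1"
proof -
  note d = prim_xmon[OF p]
  have ma: "mdvd (ind a) a" unfolding mdvd_def lookup_ind by simp
  have mb: "mdvd (ind b) b" unfolding mdvd_def lookup_ind by simp
  have ka: "Poly_Mapping.keys (ind a) \<subseteq> E" using mdvd_keys[OF ma] d(1) by (rule subset_trans)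
  have kb: "Poly_Mapping.keys (ind b) \<subseteq> E" using mdvd_keys[OF mb] d(2) by (rule subset_trans)
  have x: "xmon (ind a) = xmon (ind b)"
  proof (rule nbr_xmon[OF ka kb])
    fix e f assume "nbr n E e f"
    from xmon_nbr[OF d this] prim_disj[OF p, of e] prim_disj[OF p, of f]
    show "Poly_Mapping.lookup (ind a) e + Poly_Mapping.lookup (ind a) f =
          Poly_Mapping.lookup (ind b) e + Poly_Mapping.lookup (ind b) f"
      unfolding lookup_ind by (rule ind_arith[rotated 2])
  qed
  have ne: "ind a \<noteq> ind b"
  proof
    assume h: "ind a = ind b"
    have "a \<noteq> b" by (rule primitive_neq[OF p])
    then obtain e where e: "Poly_Mapping.lookup a e \<noteq> Poly_Mapping.lookup b e"
      by (auto simp: poly_mapping_eq_iff fun_eq_iff)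
    have "Poly_Mapping.lookup (ind a) e = Poly_Mapping.lookup (ind b) e" using h by simp
    then show False using e prim_disj[OF p, of e] unfolding lookup_ind by (auto split: if_splits)
  qed
  have "ind a = a \<and> ind b = b" by (rule prim_below[OF p ka kb x ne ma mb])
  then have "Poly_Mapping.lookup (ind a) e = Poly_Mapping.lookup a e"
     "Poly_Mapping.lookup (ind b) e = Poly_Mapping.lookup b e" by simp_all
  then show ?thesis unfolding lookup_ind by (auto split: if_splits)
qed

lemma prim_fiber:
  assumes p: "primitive TYPE('k::field) E a b" and km: "Poly_Mapping.keys m \<subseteq> E" and xm: "xmon m = xmon a"
  shows "m = a \<or> m = b"
proof -
  note d = prim_xmon[OF p]
  have le: "Poly_Mapping.lookup m e \<le> Poly_Mapping.lookup a e + Poly_Mapping.lookup b e" for e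
  proof (cases "e \<in> E")
    case False
    then have "e \<notin> Poly_Mapping.keys m" using km by blast
    then show ?thesis by (simp add: in_keys_iff)
  next
    case True
    then obtain f where f: "nbr n E e f" using nbr_exists by blast
    have 1: "Poly_Mapping.lookup m e + Poly_Mapping.lookup m f = Poly_Mapping.lookup a e + Poly_Mapping.lookup a f"
      by (rule xmon_nbr[OF km d(1) xm f])
    have 2: "Poly_Mapping.lookup a e + Poly_Mapping.lookup a f = Poly_Mapping.lookup b e + Poly_Mapping.lookup b f"
      by (rule xmon_nbr[OF d f])
    show ?thesis
      by (rule fiber_arith[OF _ _ _ _ prim_disj[OF p] prim_disj[OF p] 1 2])
         (use prim_01[OF p] in blast)+
  qed
  define k where "k = a - (a - m)"
  define a1 where "a1 = a - k"
  define m1 where "m1 = m - k"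
  have la: "a = a1 + k" unfolding a1_def k_def
    by (rule poly_mapping_eqI) (simp add: lookup_add lookup_minus)
  have lm: "m = m1 + k" unfolding m1_def k_def
    by (rule poly_mapping_eqI) (simp add: lookup_add lookup_minus)
  have x: "xmon a1 = xmon m1" using xm unfolding xmon_add la lm by simp
  have ma: "mdvd a1 a" unfolding a1_def by (rule mdvd_diff)
  have mm: "mdvd m1 m" unfolding m1_def by (rule mdvd_diff)
  have mb: "mdvd m1 b" unfolding mdvd_def
  proof
    fix e
    show "Poly_Mapping.lookup m1 e \<le> Poly_Mapping.lookup b e"
      using le[of e] unfolding m1_def k_def by (simp add: lookup_minus)
  qed
  have ka: "Poly_Mapping.keys a1 \<subseteq> E" using mdvd_keys[OF ma] d(1) by (rule subset_trans)
  have km1: "Poly_Mapping.keys m1 \<subseteq> E" using mdvd_keys[OF mm] km by (rule subset_trans)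
  show ?thesis
  proof (cases "a1 = m1")
    case True
    have "m = a"
    proof (rule poly_mapping_eqI)
      fix e
      have "Poly_Mapping.lookup a1 e = Poly_Mapping.lookup m1 e" using True by simp
      then show "Poly_Mapping.lookup m e = Poly_Mapping.lookup a e"
        unfolding a1_def m1_def k_def by (simp add: lookup_minus)
    qed
    then show ?thesis by simp
  next
    case False
    have "a1 = a \<and> m1 = b" by (rule prim_below[OF p ka km1 x False ma mb])
    have "m = b"
    proof (rule poly_mapping_eqI)
      fix e
      have "Poly_Mapping.lookup a1 e = Poly_Mapping.lookup a e" "Poly_Mapping.lookup m1 e = Poly_Mapping.lookup b e"
        using \<open>a1 = a \<and> m1 = b\<close> by simp_all
      then show "Poly_Mapping.lookup m e = Poly_Mapping.lookup b e"
        unfolding a1_def m1_def k_def by (simp add: lookup_minus)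
    qed
    then show ?thesis by simp
  qed
qed

end



lemma binom_I_sym: "((binom u v :: 'k::field tpoly) \<in> toric_ideal E) = ((binom v u :: 'k tpoly) \<in> toric_ideal E)"
proof (cases "u = v")
  case True then show ?thesis by simp
next
  case False
  then have "v \<noteq> u" by simp
  show ?thesis unfolding binom_in_I[OF False] binom_in_I[OF \<open>v \<noteq> u\<close>] by auto
qed

lemma prim_sym:
  assumes p: "primitive TYPE('k::field) E u v"
  shows "primitive TYPE('k) E v u"
proof -
  have np: "\<not> (\<exists>u' v'. u' \<noteq> v' \<and> (u', v') \<noteq> (u, v) \<and> (binom u' v' :: 'k tpoly) \<in> toric_ideal E
          \<and> mdvd u' u \<and> mdvd v' v)"
    using p unfolding primitive_def by simp
  have 1: "v \<noteq> u" using primitive_neq[OF p] by simp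
  have 2: "(binom v u :: 'k tpoly) \<in> toric_ideal E" using primitive_in_I[OF p] binom_I_sym by blast
  have 3: "\<not> (\<exists>u' v'. u' \<noteq> v' \<and> (u', v') \<noteq> (v, u) \<and> (binom u' v' :: 'k tpoly) \<in> toric_ideal E
          \<and> mdvd u' v \<and> mdvd v' u)"
  proof
    assume "\<exists>u' v'. u' \<noteq> v' \<and> (u', v') \<noteq> (v, u) \<and> (binom u' v' :: 'k tpoly) \<in> toric_ideal E
          \<and> mdvd u' v \<and> mdvd v' u"
    then obtain u' v' where h: "u' \<noteq> v'" "(u', v') \<noteq> (v, u)" "(binom u' v' :: 'k tpoly) \<in> toric_ideal E"
       "mdvd u' v" "mdvd v' u" by blast
    have "(binom v' u' :: 'k tpoly) \<in> toric_ideal E" using h(3) binom_I_sym by blast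
    moreover have "v' \<noteq> u'" "(v', u') \<noteq> (u, v)" using h(1,2) by auto
    ultimately have "\<exists>u' v'. u' \<noteq> v' \<and> (u', v') \<noteq> (u, v) \<and> (binom u' v' :: 'k tpoly) \<in> toric_ideal E
          \<and> mdvd u' u \<and> mdvd v' v"
      using h(4,5) by (intro exI[of _ v'] exI[of _ u']) simp
    with np show False by contradiction
  qed
  show ?thesis unfolding primitive_def using 1 2 3 by simp
qed

context hg2
begin

lemma prim_aux:
  assumes p: "primitive TYPE('k::field) E a b" and ku: "Poly_Mapping.keys u \<subseteq> E"
    and kv: "Poly_Mapping.keys v \<subseteq> E" and x: "xmon u = xmon v" and am: "a = m' + u"
  shows "u = v \<or> (u = a \<and> v = b)"
proof -
  note d = prim_xmon[OF p]
  have mm: "mdvd m' a" unfolding mdvd_def am by (simp add: lookup_add)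
  have km: "Poly_Mapping.keys m' \<subseteq> E" using mdvd_keys[OF mm] d(1) by (rule subset_trans)
  have kmv: "Poly_Mapping.keys (m' + v) \<subseteq> E" using keys_add[of m' v] km kv by blast
  have xmv: "xmon (m' + v) = xmon a" unfolding am xmon_add x ..
  from prim_fiber[OF p kmv xmv] show ?thesis
  proof
    assume "m' + v = a"
    then have "m' + v = m' + u" using am by simp
    then show ?thesis by simp
  next
    assume mb: "m' + v = b"
    have "m' = 0"
    proof (rule poly_mapping_eqI)
      fix e
      have "Poly_Mapping.lookup m' e \<le> Poly_Mapping.lookup a e" using mm unfolding mdvd_def by simp
      moreover have "Poly_Mapping.lookup m' e \<le> Poly_Mapping.lookup b e" unfolding mb[symmetric]
        by (simp add: lookup_add)
      ultimately show "Poly_Mapping.lookup m' e = Poly_Mapping.lookup 0 e"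
        using prim_disj[OF p, of e] by auto
    qed
    then show ?thesis using am mb by simp
  qed
qed

lemma prim_lookup_zero:
  assumes p: "primitive TYPE('k::field) E a b" and I: "(binom u v :: 'k tpoly) \<in> toric_ideal E"
    and n1: "\<not> (u = a \<and> v = b)" and n2: "\<not> (u = b \<and> v = a)"
  shows "Poly_Mapping.lookup (c * (binom u v :: 'k tpoly)) a = 0"
proof (cases "u = v")
  case True then show ?thesis by (simp add: binom_same)
next
  case False
  note d = binom_in_I_D[OF I False]
  have z: "Poly_Mapping.lookup (c * Poly_Mapping.single w (1::'k)) a = 0"
    if "Poly_Mapping.keys w \<subseteq> E" "Poly_Mapping.keys w' \<subseteq> E" "xmon w = xmon w'" "w \<noteq> w'"
      "\<not> (w = a \<and> w' = b)" for w w'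
  proof (rule ccontr)
    assume "Poly_Mapping.lookup (c * Poly_Mapping.single w (1::'k)) a \<noteq> 0"
    then have "a \<in> Poly_Mapping.keys (c * Poly_Mapping.single w (1::'k))" by (simp add: in_keys_iff)
    then have "a \<in> (\<lambda>m. m + w) ` Poly_Mapping.keys c" using keys_mult_single by blast
    then obtain m' where "a = m' + w" by blast
    from prim_aux[OF p that(1,2,3) this] that(4,5) show False by simp
  qed
  have zu: "Poly_Mapping.lookup (c * Poly_Mapping.single u (1::'k)) a = 0"
    by (rule z[OF d(1) d(2) d(3) False]) (use n1 in simp)
  have zv: "Poly_Mapping.lookup (c * Poly_Mapping.single v (1::'k)) a = 0"
    by (rule z[OF d(2) d(1) d(3)[symmetric]]) (use False n2 in auto)
  show ?thesis unfolding binom_def right_diff_distrib lookup_minus zu zv by simp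
qed

lemma not_in_gen:
  assumes p: "primitive TYPE('k::field) E a b" and XI: "X \<subseteq> toric_ideal E"
    and Xb: "\<forall>x\<in>X. is_binomial x" and n1: "binom a b \<notin> X" and n2: "binom b a \<notin> X"
  shows "(binom a b :: 'k tpoly) \<notin> ideal_gen E X"
proof
  assume "(binom a b :: 'k tpoly) \<in> ideal_gen E X"
  then obtain F c where F: "(binom a b :: 'k tpoly) = (\<Sum>g\<in>F. c g * g)" "finite F" "F \<subseteq> X"
    unfolding ideal_gen_def by blast
  have "Poly_Mapping.lookup (binom a b :: 'k tpoly) a = 1"
    using primitive_neq[OF p] by (simp add: lookup_binom)
  moreover have "Poly_Mapping.lookup (\<Sum>g\<in>F. c g * g) a = 0"
    unfolding lookup_sum
  proof (rule sum.neutral, rule ballI)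
    fix g assume g: "g \<in> F"
    then have gX: "g \<in> X" using F(3) by blast
    then obtain u v where guv: "g = binom u v" using Xb unfolding is_binomial_def by blast
    have gI: "(binom u v :: 'k tpoly) \<in> toric_ideal E" using gX XI guv by blast
    have "\<not> (u = a \<and> v = b)" using gX guv n1 by blast
    moreover have "\<not> (u = b \<and> v = a)" using gX guv n2 by blast
    ultimately show "Poly_Mapping.lookup (c g * g) a = 0"
      unfolding guv by (rule prim_lookup_zero[OF p gI])
  qed
  ultimately show False using F(1) by simp
qed

end



theorem proposition4p2:
  fixes n :: nat and E :: "nat set set"
  assumes "hypergraph n E" and "uniform_hg E" and "two_regular n E"
  shows "unique_minimal_gen_set E (graver_basis E :: ('k::field) tpoly set)"
proof -
  interpret hg2 n E using assms(1,3) by unfold_locales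
  define G where "G = (graver_basis E :: 'k tpoly set)"
  have Gchar: "g \<in> G \<longleftrightarrow> (\<exists>u v. g = binom u v \<and> primitive TYPE('k) E u v)" for g
    unfolding G_def graver_basis_def by blast
  have Gneg: "- g \<in> G" if "g \<in> G" for g
  proof -
    from that obtain u v where "g = binom u v" "primitive TYPE('k) E u v" using Gchar by blast
    then have "- g = binom v u" "primitive TYPE('k) E v u" by (simp_all add: binom_neg prim_sym)
    then show ?thesis using Gchar by blast
  qed
  have GnegG: "G \<union> uminus ` G = G"
  proof
    show "G \<union> uminus ` G \<subseteq> G" using Gneg by blast
  qed blast
  have GI: "G \<subseteq> toric_ideal E"
  proof
    fix g assume "g \<in> G"
    then obtain u v where "g = binom u v" "primitive TYPE('k) E u v" using Gchar by blast
    then show "g \<in> toric_ideal E" using primitive_in_I by blast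
  qed
  have Gb: "\<forall>g\<in>G. is_binomial g" using Gchar unfolding is_binomial_def by blast
  have c1: "ideal_gen E G = toric_ideal E"
  proof
    show "ideal_gen E G \<subseteq> toric_ideal E" by (rule ideal_gen_binoms_sub[OF GI Gb])
    show "toric_ideal E \<subseteq> ideal_gen E G" using toric_sub_gen[OF finE] unfolding G_def by blast
  qed
  have c2: "minimal_gen_set E S" if S1: "S \<union> uminus ` S = G \<union> uminus ` G" and S2: "\<forall>g\<in>S. - g \<notin> S" for S
  proof -
    have SG: "S \<subseteq> G" using S1 GnegG by blast
    have SI: "S \<subseteq> toric_ideal E" using SG GI by blast
    have Sb: "\<forall>g\<in>S. is_binomial g" using SG Gb by blast
    have gen: "ideal_gen E S = toric_ideal E"
    proof
      show "ideal_gen E S \<subseteq> toric_ideal E" by (rule ideal_gen_binoms_sub[OF SI Sb])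
      have "G \<subseteq> ideal_gen E S"
      proof
        fix g assume "g \<in> G"
        then have "g \<in> S \<union> uminus ` S" using S1 by blast
        then show "g \<in> ideal_gen E S"
        proof
          assume "g \<in> S" then show ?thesis by (rule ideal_gen_base)
        next
          assume "g \<in> uminus ` S"
          then obtain s where "s \<in> S" "g = - s" by blast
          then show ?thesis using ideal_gen_uminus[OF ideal_gen_base[of s S E]] by simp
        qed
      qed
      then have "ideal_gen E G \<subseteq> ideal_gen E S" by (rule ideal_gen_closed)
      then show "toric_ideal E \<subseteq> ideal_gen E S" using c1 by simp
    qed
    have mini: "ideal_gen E (S - {g}) \<noteq> toric_ideal E" if g: "g \<in> S" for g
    proof
      assume eq: "ideal_gen E (S - {g}) = toric_ideal E"
      from g SG obtain a b where ab: "g = binom a b" "primitive TYPE('k) E a b" using Gchar by blast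
      have ng: "- g \<notin> S" using S2 g by blast
      have eqg: "- g = binom b a" unfolding ab(1) by (rule binom_neg)
      have "binom b a \<notin> S" using ng unfolding eqg .
      then have "binom b a \<notin> S - {g}" by simp
      moreover have "binom a b \<notin> S - {g}" using ab(1) by simp
      moreover have "S - {g} \<subseteq> toric_ideal E" using SI by blast
      moreover have "\<forall>x\<in>S - {g}. is_binomial x" using Sb by blast
      ultimately have "(binom a b :: 'k tpoly) \<notin> ideal_gen E (S - {g})"
        using not_in_gen[OF ab(2)] by blast
      moreover have "g \<in> toric_ideal E" using g SI by blast
      ultimately show False using eq ab(1) by simp
    qed
    show ?thesis unfolding minimal_gen_set_def using SI gen mini by blast
  qed
  have c3: "B \<union> uminus ` B = G \<union> uminus ` G"
    if Bb: "\<forall>b\<in>B. is_binomial b" and Bm: "minimal_gen_set E B" for B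
  proof -
    have BI: "B \<subseteq> toric_ideal E" and genB: "ideal_gen E B = toric_ideal E"
      and minB: "\<forall>g\<in>B. ideal_gen E (B - {g}) \<noteq> toric_ideal E"
      using Bm unfolding minimal_gen_set_def by blast+
    have GB: "g \<in> B \<or> - g \<in> B" if g: "g \<in> G" for g
    proof (rule ccontr)
      assume h: "\<not> (g \<in> B \<or> - g \<in> B)"
      from g obtain a b where ab: "g = binom a b" "primitive TYPE('k) E a b" using Gchar by blast
      have "binom a b \<notin> B" using h ab(1) by simp
      moreover have "binom b a \<notin> B"
      proof -
        have ng: "- g \<notin> B" using h by simp
        have eqg: "- g = binom b a" unfolding ab(1) by (rule binom_neg)
        show ?thesis using ng unfolding eqg .
      qed
      ultimately have "(binom a b :: 'k tpoly) \<notin> ideal_gen E B" using not_in_gen[OF ab(2) BI Bb] by blast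
      moreover have "g \<in> toric_ideal E" using g GI by blast
      ultimately show False using genB ab(1) by simp
    qed
    have BG: "B \<subseteq> G"
    proof
      fix b assume b: "b \<in> B"
      show "b \<in> G"
      proof (rule ccontr)
        assume nb: "b \<notin> G"
        have "ideal_gen E (B - {b}) = toric_ideal E"
        proof
          show "ideal_gen E (B - {b}) \<subseteq> toric_ideal E"
            by (rule ideal_gen_binoms_sub) (use BI Bb in blast)+
          have "G \<subseteq> ideal_gen E (B - {b})"
          proof
            fix g assume g: "g \<in> G"
            from GB[OF g] show "g \<in> ideal_gen E (B - {b})"
            proof
              assume "g \<in> B"
              moreover have "g \<noteq> b" using g nb by blast
              ultimately show ?thesis by (intro ideal_gen_base) simp
            next
              assume mg: "- g \<in> B"
              moreover have "- g \<noteq> b" using Gneg[OF g] nb by blast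
              ultimately have "- g \<in> ideal_gen E (B - {b})" by (intro ideal_gen_base) simp
              from ideal_gen_uminus[OF this] show ?thesis by simp
            qed
          qed
          then have "ideal_gen E G \<subseteq> ideal_gen E (B - {b})" by (rule ideal_gen_closed)
          then show "toric_ideal E \<subseteq> ideal_gen E (B - {b})" using c1 by simp
        qed
        then show False using minB b by blast
      qed
    qed
    have "B \<union> uminus ` B = G"
    proof
      show "B \<union> uminus ` B \<subseteq> G" using BG Gneg by blast
      show "G \<subseteq> B \<union> uminus ` B"
      proof
        fix g assume g: "g \<in> G"
        from GB[OF g] show "g \<in> B \<union> uminus ` B"
        proof
          assume "- g \<in> B"
          then have "- (- g) \<in> uminus ` B" by blast
          then show ?thesis by simp
        qed simp
      qed
    qed
    then show ?thesis using GnegG by simp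
  qed
  show ?thesis unfolding unique_minimal_gen_set_def G_def[symmetric]
  proof (intro conjI allI impI)
    show "ideal_gen E G = toric_ideal E" by (rule c1)
  next
    fix S :: "'k tpoly set" assume h: "S \<union> uminus ` S = G \<union> uminus ` G \<and> (\<forall>g\<in>S. - g \<notin> S)"
    show "minimal_gen_set E S" by (rule c2[OF conjunct1[OF h] conjunct2[OF h]])
  next
    fix B :: "'k tpoly set" assume h: "(\<forall>b\<in>B. is_binomial b) \<and> minimal_gen_set E B"
    show "B \<union> uminus ` B = G \<union> uminus ` G" by (rule c3[OF conjunct1[OF h] conjunct2[OF h]])
  qed
qed


end
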